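(* Let $f$ be a Stokes vector field and $K$ a Mueller transform field, with rotation forms $\mathbf f$ and $\mathbf K$ respectively. Then the rotation form $\mathbf g$ of the Stokes vector field $K_{\mathcal F}[f]$ is given, for all $R_o\in SO(3)$, by $$\mathbf g(R_o)=\frac{1}{2\pi}\int_{SO(3)}\mathbf K(R_i,R_o)\,\mathbf f(R_i)\,dR_i.$$
   Context: Fix a right-handed orthonormal global frame $F_g=[\hat x_g,\hat y_g,\hat z_g]$ of $\mathbb R^3$; $S^2$ is the unit sphere with solid-angle measure $d\hat\omega$. A local frame at $\hat\omega$ is a right-handed orthonormal frame $F$ whose third axis is $\hat\omega$. A rotation $R$ acts on frames by $RF$ (rotating each axis). Stokes space. $\mathcal S_{\hat\omega}$ consists of classes $[\mathbf s]_F$ ($\mathbf s\in\mathbb R^4$, $F$ a local frame at $\hat\omega$) with $(\mathbf s,F)\sim(C(\vartheta)\mathbf s,F')$, where $F'$ is $F$ rotated by $\vartheta$ about $\hat\omega$. Here $C(\vartheta)$ is the identity on coordinates 0, 3 and acts on coordinates $(1,2)$ by $\begin{pmatrix}\cos2\vartheta&\sin2\vartheta\\-\sin2\vartheta&\cos2\vartheta\end{pmatrix}$. $[s]^F$ denotes the component vector of $s$ with respect to $F$. A Stokes vector field $f$ assigns $f(\hat\omega)\in\mathcal S_{\hat\omega}$ to each $\hat\omega$. Mueller transform fields. A Mueller transform field $K$ assigns to each $(\hat\omega_i,\hat\omega_o)$ a real linear map $K(\hat\omega_i,\hat\omega_o):\mathcal S_{\hat\omega_i}\to\mathcal S_{\hat\omega_o}$.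 Its Mueller matrix $[N]^{F_i\to F_o}$ is defined by $[Ns]^{F_o}=[N]^{F_i\to F_o}[s]^{F_i}$. The induced operator is $K_{\mathcal F}[f](\hat\omega_o)=\int_{S^2}K(\hat\omega_i,\hat\omega_o)f(\hat\omega_i)d\hat\omega_i$. Rotation forms. The rotation form of a Stokes vector field $f$ is $\mathbf f:SO(3)\to\mathbb R^4$, $\mathbf f(R)=[f(R\hat z_g)]^{RF_g}$. The rotation form of $K$ is $\mathbf K:SO(3)\times SO(3)\to\mathbb R^{4\times4}$, $\mathbf K(R_i,R_o)=[K(R_i\hat z_g,R_o\hat z_g)]^{R_iF_g\to R_oF_g}$. Measure on $SO(3)$. $\int_{SO(3)}h(R)\,dR=\int_0^{2\pi}\int_0^\pi\int_0^{2\pi}h(R_{\hat z_g}(\alpha)R_{\hat y_g}(\beta)R_{\hat z_g}(\gamma))\sin\beta\,d\alpha\,d\beta\,d\gamma$, where $R_{\hat u}(t)$ is rotation by angle $t$ about the axis $\hat u$. *)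

theory Defs
  imports "HOL-Analysis.Analysis"
begin

text \<open>A frame [x,y,z] is represented by the 3x3 matrix whose columns are its axes.
  Thus the global frame F_g is the identity matrix, a right-handed orthonormal frame
  is exactly a matrix in SO(3), and a rotation R acts on a frame F by R ** F.\<close>

type_synonym vec3 = "real^3"
type_synonym mat3 = "real^3^3"
type_synonym stokes_vec = "real^4"
type_synonym stokes_mat = "real^4^4"

definition SO3 :: "mat3 set" where
  "SO3 = {R. orthogonal_matrix R \<and> det R = 1}"

definition global_frame :: mat3 where
  "global_frame = mat 1"

definition xg :: vec3 where "xg = axis 1 1"
definition yg :: vec3 where "yg = axis 2 1"
definition zg :: vec3 where "zg = axis 3 1"

definition local_frames :: "vec3 \<Rightarrow> mat3 set" where
  "local_frames w = {F. F \<in> SO3 \<and> column 3 F = w}"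

text \<open>Rotation by angle t about the (unit) axis u, right-hand rule (Rodrigues formula).\<close>
definition rot_axis :: "vec3 \<Rightarrow> real \<Rightarrow> mat3" where
  "rot_axis u t = matrix (\<lambda>x. cos t *\<^sub>R x + sin t *\<^sub>R cross3 u x + ((1 - cos t) * (u \<bullet> x)) *\<^sub>R u)"

definition euler :: "real \<Rightarrow> real \<Rightarrow> real \<Rightarrow> mat3" where
  "euler a b c = rot_axis zg a ** rot_axis yg b ** rot_axis zg c"

abbreviation S2 :: "vec3 set" where
  "S2 \<equiv> sphere 0 1"

text \<open>Integral over SO(3) with respect to the measure defined in the paper via Euler angles.\<close>
definition so3_integral :: "(mat3 \<Rightarrow> 'b::{banach,second_countable_topology}) \<Rightarrow> 'b" where
  "so3_integral h =
     set_lebesgue_integral lborel ({0..2*pi} \<times> {0..pi} \<times> {0..2*pi})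
       (\<lambda>p. sin (fst (snd p)) *\<^sub>R h (euler (fst p) (fst (snd p)) (snd (snd p))))"

text \<open>Integral over S^2 with respect to solid angle, via spherical coordinates
  (azimuth a in [0,2pi], polar angle b in [0,pi], Jacobian sin b).\<close>
definition sph :: "real \<Rightarrow> real \<Rightarrow> vec3" where
  "sph a b = vector [cos a * sin b, sin a * sin b, cos b]"

definition sphere_integral :: "(vec3 \<Rightarrow> 'b::{banach,second_countable_topology}) \<Rightarrow> 'b" where
  "sphere_integral h =
     set_lebesgue_integral lborel ({0..2*pi} \<times> {0..pi})
       (\<lambda>p. sin (snd p) *\<^sub>R h (sph (fst p) (snd p)))"

definition Cmat :: "real \<Rightarrow> stokes_mat" where
  "Cmat t = (\<chi> i j.
      if (i = 0 \<and> j = 0) \<or> (i = 3 \<and> j = 3) then 1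
      else if (i = 1 \<and> j = 1) \<or> (i = 2 \<and> j = 2) then cos (2 * t)
      else if i = 1 \<and> j = 2 then sin (2 * t)
      else if i = 2 \<and> j = 1 then - sin (2 * t)
      else 0)"

type_synonym stokes_class = "(stokes_vec \<times> mat3) set"

definition stokes_rel :: "vec3 \<Rightarrow> ((stokes_vec \<times> mat3) \<times> (stokes_vec \<times> mat3)) set" where
  "stokes_rel w = {((s, F), (s', F')). F \<in> local_frames w \<and> F' \<in> local_frames w \<and>
       (\<exists>t. F' = rot_axis w t ** F \<and> s' = Cmat t *v s)}"

definition stokes_space :: "vec3 \<Rightarrow> stokes_class set" where
  "stokes_space w = (UNIV \<times> local_frames w) // stokes_rel w"

definition stokes_cls :: "vec3 \<Rightarrow> stokes_vec \<Rightarrow> mat3 \<Rightarrow> stokes_class" where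
  "stokes_cls w s F = stokes_rel w `` {(s, F)}"

definition comp :: "stokes_class \<Rightarrow> mat3 \<Rightarrow> stokes_vec" where
  "comp c F = (THE s. (s, F) \<in> c)"

definition ref_frame :: "vec3 \<Rightarrow> mat3" where
  "ref_frame w = (SOME F. F \<in> local_frames w)"

definition stokes_add :: "vec3 \<Rightarrow> stokes_class \<Rightarrow> stokes_class \<Rightarrow> stokes_class" where
  "stokes_add w c d = stokes_cls w (comp c (ref_frame w) + comp d (ref_frame w)) (ref_frame w)"

definition stokes_scale :: "vec3 \<Rightarrow> real \<Rightarrow> stokes_class \<Rightarrow> stokes_class" where
  "stokes_scale w a c = stokes_cls w (a *\<^sub>R comp c (ref_frame w)) (ref_frame w)"

definition stokes_linear :: "vec3 \<Rightarrow> vec3 \<Rightarrow> (stokes_class \<Rightarrow> stokes_class) \<Rightarrow> bool" where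
  "stokes_linear wi wo N \<longleftrightarrow>
     (\<forall>c \<in> stokes_space wi. N c \<in> stokes_space wo) \<and>
     (\<forall>c \<in> stokes_space wi. \<forall>d \<in> stokes_space wi.
        N (stokes_add wi c d) = stokes_add wo (N c) (N d)) \<and>
     (\<forall>a. \<forall>c \<in> stokes_space wi. N (stokes_scale wi a c) = stokes_scale wo a (N c))"

definition stokes_sphere_integral :: "vec3 \<Rightarrow> (vec3 \<Rightarrow> stokes_class) \<Rightarrow> stokes_class" where
  "stokes_sphere_integral w h =
     stokes_cls w (sphere_integral (\<lambda>v. comp (h v) (ref_frame w))) (ref_frame w)"

definition stokes_field :: "(vec3 \<Rightarrow> stokes_class) \<Rightarrow> bool" where
  "stokes_field f \<longleftrightarrow> (\<forall>w \<in> S2. f w \<in> stokes_space w)"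

definition mueller_field :: "(vec3 \<Rightarrow> vec3 \<Rightarrow> stokes_class \<Rightarrow> stokes_class) \<Rightarrow> bool" where
  "mueller_field K \<longleftrightarrow> (\<forall>wi \<in> S2. \<forall>wo \<in> S2. stokes_linear wi wo (K wi wo))"

definition mueller_matrix ::
    "vec3 \<Rightarrow> (stokes_class \<Rightarrow> stokes_class) \<Rightarrow> mat3 \<Rightarrow> mat3 \<Rightarrow> stokes_mat" where
  "mueller_matrix wi N Fi Fo = (THE M. \<forall>c \<in> stokes_space wi. comp (N c) Fo = M *v comp c Fi)"

definition induced_op ::
    "(vec3 \<Rightarrow> vec3 \<Rightarrow> stokes_class \<Rightarrow> stokes_class) \<Rightarrow> (vec3 \<Rightarrow> stokes_class) \<Rightarrow> vec3 \<Rightarrow> stokes_class" where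
  "induced_op K f wo = stokes_sphere_integral wo (\<lambda>wi. K wi wo (f wi))"

definition rot_form :: "(vec3 \<Rightarrow> stokes_class) \<Rightarrow> mat3 \<Rightarrow> stokes_vec" where
  "rot_form f R = comp (f (R *v zg)) (R ** global_frame)"

definition rot_form_K ::
    "(vec3 \<Rightarrow> vec3 \<Rightarrow> stokes_class \<Rightarrow> stokes_class) \<Rightarrow> mat3 \<Rightarrow> mat3 \<Rightarrow> stokes_mat" where
  "rot_form_K K Ri Ro =
     mueller_matrix (Ri *v zg) (K (Ri *v zg) (Ro *v zg)) (Ri ** global_frame) (Ro ** global_frame)"

end

theory Submission
  imports Defs
begin


definition Lrod :: "vec3 \<Rightarrow> real \<Rightarrow> vec3 \<Rightarrow> vec3" where
  "Lrod u t x = cos t *\<^sub>R x + sin t *\<^sub>R cross3 u x + ((1 - cos t) * (u \<bullet> x)) *\<^sub>R u"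

lemma linear_Lrod: "linear (Lrod u t)"
  unfolding Lrod_def
  by (intro linearI) (simp_all add: cross_add_right cross_mult_right inner_add_right algebra_simps)

lemma rot_axis_mv: "rot_axis u t *v x = Lrod u t x"
proof -
  have "rot_axis u t = matrix (Lrod u t)" unfolding rot_axis_def Lrod_def ..
  then show ?thesis using matrix_vector_mul(2)[OF linear_Lrod, of u t] by metis
qed

lemma cross_cross_unit: "u \<bullet> u = 1 \<Longrightarrow> cross3 u (cross3 u x) = (u \<bullet> x) *\<^sub>R u - x"
  unfolding vec_eq_iff forall_3
  by (simp add: cross3_def inner_vec_def sum_3 vec_eq_iff forall_3 algebra_simps; algebra)

lemma Lrod_comp:
  assumes "u \<bullet> u = 1"
  shows "Lrod u s (Lrod u t x) = Lrod u (s + t) x"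
proof -
  have a: "cross3 u (Lrod u t x) = cos t *\<^sub>R cross3 u x + sin t *\<^sub>R ((u \<bullet> x) *\<^sub>R u - x)"
    unfolding Lrod_def using cross_cross_unit[OF assms, of x]
    by (simp add: cross_add_right cross_mult_right)
  have b: "u \<bullet> Lrod u t x = u \<bullet> x"
    unfolding Lrod_def using assms
    by (simp add: inner_add_right dot_cross_self algebra_simps)
  show ?thesis
    unfolding Lrod_def[of u s] a b unfolding Lrod_def cos_add sin_add
    by (simp add: algebra_simps)
qed

lemma rot_axis_comp:
  assumes "u \<bullet> u = 1"
  shows "rot_axis u s ** rot_axis u t = rot_axis u (s + t)"
  unfolding matrix_eq
  by (simp add: matrix_vector_mul_assoc[symmetric] rot_axis_mv Lrod_comp[OF assms])

lemma rot_axis_0: "rot_axis u 0 = mat 1"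
  unfolding matrix_eq by (simp add: rot_axis_mv Lrod_def)



lemma inner_transpose: "(A *v x) \<bullet> y = x \<bullet> (transpose A *v (y::real^'n))"
  by (metis dot_lmul_matrix vector_transpose_matrix)

lemma SO3_orth: "F \<in> SO3 \<Longrightarrow> transpose F ** F = mat 1 \<and> F ** transpose F = mat 1"
  by (simp add: SO3_def orthogonal_matrix_def)

lemma SO3_col: "F \<in> SO3 \<Longrightarrow> F *v zg = column 3 F"
  by (simp add: zg_def matrix_vector_mult_basis)

lemma SO3_unit: assumes "F \<in> SO3" shows "(F *v zg) \<bullet> (F *v zg) = 1"
proof -
  have "(F *v zg) \<bullet> (F *v zg) = zg \<bullet> ((transpose F ** F) *v zg)"
    by (simp add: inner_transpose matrix_vector_mul_assoc)
  also have "\<dots> = 1" using SO3_orth[OF assms] by (simp add: zg_def)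
  finally show ?thesis .
qed

lemma Lrod_zg: "Lrod zg t x = vector [cos t * x$1 - sin t * x$2, sin t * x$1 + cos t * x$2, x$3]"
  unfolding Lrod_def zg_def
  by (simp add: vec_eq_iff forall_3 cross3_def inner_vec_def sum_3 axis_def vector_def algebra_simps)

lemma Lrod_yg: "Lrod yg t x = vector [cos t * x$1 + sin t * x$3, x$2, cos t * x$3 - sin t * x$1]"
  unfolding Lrod_def yg_def
  by (simp add: vec_eq_iff forall_3 cross3_def inner_vec_def sum_3 axis_def vector_def algebra_simps)

lemma rot_conj:
  assumes F: "F \<in> SO3" and u: "F *v zg = u"
  shows "rot_axis u t = F ** rot_axis zg t ** transpose F"
  unfolding matrix_eq
proof
  fix x
  have rot: "rotation_matrix F" using F by (simp add: SO3_def rotation_matrix_def)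
  let ?y = "transpose F *v x"
  have Fy: "F *v ?y = x" using SO3_orth[OF F] by (metis matrix_vector_mul_assoc matrix_vector_mul_lid)
  have "(F ** rot_axis zg t ** transpose F) *v x = F *v Lrod zg t ?y"
    by (simp add: matrix_vector_mul_assoc[symmetric] rot_axis_mv)
  also have "\<dots> = cos t *\<^sub>R (F *v ?y) + sin t *\<^sub>R (F *v cross3 zg ?y) + ((1 - cos t) * (zg \<bullet> ?y)) *\<^sub>R (F *v zg)"
    unfolding Lrod_def by (simp add: matrix_vector_right_distrib matrix_vector_mult_scaleR)
  also have "\<dots> = Lrod u t x"
    unfolding Lrod_def Fy cross_rotation_matrix[OF rot, symmetric] u
    using inner_transpose[of F zg x] u by simp
  finally show "rot_axis u t *v x = (F ** rot_axis zg t ** transpose F) *v x"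
    by (simp add: rot_axis_mv)
qed



lemma SO3_mul: "A \<in> SO3 \<Longrightarrow> B \<in> SO3 \<Longrightarrow> A ** B \<in> SO3"
  by (simp add: SO3_def orthogonal_matrix_mul det_mul)

lemma SO3_transpose: "A \<in> SO3 \<Longrightarrow> transpose A \<in> SO3"
  by (simp add: SO3_def)

lemma rot_zg_mv: "(rot_axis zg t *v x) = vector [cos t * x$1 - sin t * x$2, sin t * x$1 + cos t * x$2, x$3]"
  by (simp add: rot_axis_mv Lrod_zg)

lemma fix_zg_rot:
  assumes G: "G \<in> SO3" and Gz: "G *v zg = zg"
  shows "\<exists>t. G = rot_axis zg t"
proof -
  have o1: "transpose G ** G = mat 1" using SO3_orth[OF G] by simp
  have GTz: "transpose G *v zg = zg"
    using o1 Gz by (metis matrix_vector_mul_assoc matrix_vector_mul_lid)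
  have d: "det G = 1" using G by (simp add: SO3_def)
  have c3: "G$1$3 = 0" "G$2$3 = 0" "G$3$3 = 1"
    using Gz by (simp_all add: vec_eq_iff forall_3 matrix_vector_mult_def sum_3 zg_def axis_def)
  have r3: "G$3$1 = 0" "G$3$2 = 0"
    using GTz by (simp_all add: vec_eq_iff forall_3 matrix_vector_mult_def sum_3 zg_def axis_def transpose_def)
  have oo: "(transpose G ** G)$1$1 = 1" "(transpose G ** G)$2$2 = 1" "(transpose G ** G)$1$2 = 0"
    using o1 by (simp_all add: mat_def)
  define a where "a = G$1$1"
  define b where "b = G$2$1"
  define c where "c = G$1$2"
  define e where "e = G$2$2"
  have h1: "a^2 + b^2 = 1" "c^2 + e^2 = 1" "a*c + b*e = 0"
    using oo r3 by (simp_all add: matrix_matrix_mult_def sum_3 transpose_def a_def b_def c_def e_def power2_eq_square)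
  have h2: "a*e - c*b = 1" using d c3 r3 by (simp add: det_3 a_def b_def c_def e_def algebra_simps)
  have "(e - a)^2 + (c + b)^2 = 0"
    using h1 h2 by (simp add: power2_eq_square algebra_simps)
  then have ea: "e = a" and cb: "c = - b"
    by (smt (verit) sum_power2_eq_zero_iff)+
  obtain t where t: "a = cos t" "b = sin t" using sincos_total_2pi[OF h1(1)] by metis
  have "G = rot_axis zg t"
    unfolding matrix_eq
  proof
    fix x
    show "G *v x = rot_axis zg t *v x"
      unfolding rot_zg_mv
      using c3 r3 ea cb t
      by (simp add: vec_eq_iff forall_3 matrix_vector_mult_def sum_3 vector_def a_def b_def c_def e_def algebra_simps)
  qed
  then show ?thesis ..
qed

lemma local_frames_rot:
  assumes F: "F \<in> SO3" and F': "F' \<in> SO3" and eq: "F' *v zg = F *v zg"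
  shows "\<exists>t. F' = rot_axis (F *v zg) t ** F"
proof -
  define G where "G = transpose F ** F'"
  have G: "G \<in> SO3" unfolding G_def by (intro SO3_mul SO3_transpose F F')
  have oF: "transpose F ** F = mat 1" "F ** transpose F = mat 1" using SO3_orth[OF F] by auto
  have "G *v zg = zg" unfolding G_def
    by (metis eq oF(1) matrix_vector_mul_assoc matrix_vector_mul_lid)
  then obtain t where t: "G = rot_axis zg t" using fix_zg_rot[OF G] by blast
  have "rot_axis (F *v zg) t ** F = F ** G ** (transpose F ** F)"
    unfolding rot_conj[OF F refl] t by (simp add: matrix_mul_assoc)
  also have "\<dots> = F'" unfolding oF G_def by (metis matrix_mul_assoc matrix_mul_lid matrix_mul_rid oF(2))
  finally show ?thesis by metis
qed

lemma rot_id_imp: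
  assumes F: "F \<in> SO3" and R: "rot_axis (F *v zg) t = mat 1"
  shows "cos t = 1 \<and> sin t = 0"
proof -
  have oF: "transpose F ** F = mat 1" "F ** transpose F = mat 1" using SO3_orth[OF F] by auto
  have "transpose F ** (F ** rot_axis zg t ** transpose F) ** F = mat 1"
    using R unfolding rot_conj[OF F refl] by (simp add: oF)
  then have "rot_axis zg t = mat 1"
    by (simp add: matrix_mul_assoc oF) (metis matrix_mul_assoc matrix_mul_rid oF(1) matrix_mul_lid)
  then have "rot_axis zg t *v axis 1 1 = axis 1 1" by simp
  then show ?thesis unfolding rot_zg_mv
    by (simp add: vec_eq_iff forall_3 vector_def axis_def)
qed



lemma entry_mv: "A $ i $ j = (A *v axis j 1) $ i" for A :: "real^'n^'m"
  by (simp add: matrix_vector_mult_basis column_def)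

lemma rot_yg_mv: "(rot_axis yg t *v x) = vector [cos t * x$1 + sin t * x$3, x$2, cos t * x$3 - sin t * x$1]"
  by (simp add: rot_axis_mv Lrod_yg)

lemma rot_zg_SO3: "rot_axis zg t \<in> SO3"
proof -
  have e: "\<And>i j. rot_axis zg t $ i $ j = (rot_axis zg t *v axis j 1) $ i" by (rule entry_mv)
  show ?thesis
    unfolding SO3_def mem_Collect_eq orthogonal_matrix det_3 e rot_zg_mv
    by (simp add: vec_eq_iff forall_3 matrix_matrix_mult_def sum_3 transpose_def mat_def axis_def vector_def e rot_zg_mv algebra_simps flip: power2_eq_square)
qed

lemma rot_yg_SO3: "rot_axis yg t \<in> SO3"
proof -
  have e: "\<And>i j. rot_axis yg t $ i $ j = (rot_axis yg t *v axis j 1) $ i" by (rule entry_mv)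
  show ?thesis
    unfolding SO3_def mem_Collect_eq orthogonal_matrix det_3 e rot_yg_mv
    by (simp add: vec_eq_iff forall_3 matrix_matrix_mult_def sum_3 transpose_def mat_def axis_def vector_def e rot_yg_mv algebra_simps flip: power2_eq_square)
qed

lemma euler_SO3: "euler a b c \<in> SO3"
  unfolding euler_def by (intro SO3_mul rot_zg_SO3 rot_yg_SO3)

lemma euler_zg: "euler a b c *v zg = sph a b"
proof -
  have z: "(zg::vec3) = vector [0,0,1]" by (simp add: zg_def vec_eq_iff forall_3 axis_def vector_def)
  have 1: "rot_axis zg c *v zg = vector [0,0,1]" unfolding rot_zg_mv by (simp add: z)
  have 2: "rot_axis yg b *v vector [0,0,1] = vector [sin b, 0, cos b]" unfolding rot_yg_mv by simp
  have 3: "rot_axis zg a *v vector [sin b, 0, cos b] = sph a b" unfolding rot_zg_mv sph_def by (simp add: algebra_simps)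
  show ?thesis unfolding euler_def by (simp add: matrix_vector_mul_assoc[symmetric] 1 2 3)
qed



lemma Cmat_mv: "Cmat t *v s = (\<chi> i. if i = 1 then cos (2*t) * s$1 + sin (2*t) * s$2
    else if i = 2 then cos (2*t) * s$2 - sin (2*t) * s$1 else s$i)"
  unfolding vec_eq_iff forall_4
  by (simp add: matrix_vector_mult_def sum_4 Cmat_def)

lemma Cmat_mul: "Cmat s ** Cmat t = Cmat (s + t)"
  unfolding matrix_eq
proof
  fix x :: stokes_vec
  have e: "cos (2 * (s + t)) = cos (2 * s) * cos (2*t) - sin (2 * s) * sin (2*t)"
     "sin (2 * (s + t)) = sin (2 * s) * cos (2*t) + cos (2 * s) * sin (2*t)"
    by (simp_all add: distrib_left cos_add sin_add)
  show "(Cmat s ** Cmat t) *v x = Cmat (s + t) *v x"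
    unfolding matrix_vector_mul_assoc[symmetric] Cmat_mv e
    by (simp add: vec_eq_iff forall_4 algebra_simps)
qed

lemma Cmat_0: "Cmat 0 = mat 1"
  unfolding matrix_eq by (simp add: Cmat_mv vec_eq_iff forall_4)

lemma Cmat_id: "cos t = 1 \<Longrightarrow> sin t = 0 \<Longrightarrow> Cmat t = mat 1"
  unfolding matrix_eq by (simp add: Cmat_mv vec_eq_iff forall_4 cos_double sin_double)



lemma lf_D: "F \<in> local_frames w \<Longrightarrow> F \<in> SO3 \<and> F *v zg = w \<and> w \<bullet> w = 1"
  unfolding local_frames_def using SO3_unit SO3_col by auto

lemma lf_I: "F \<in> SO3 \<Longrightarrow> F \<in> local_frames (F *v zg)"
  unfolding local_frames_def using SO3_col by auto

lemma rel_iff: "((s, F), (s', F')) \<in> stokes_rel w \<longleftrightarrow>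
   F \<in> local_frames w \<and> F' \<in> local_frames w \<and> (\<exists>t. F' = rot_axis w t ** F \<and> s' = Cmat t *v s)"
  unfolding stokes_rel_def by auto

lemma rel_refl: "F \<in> local_frames w \<Longrightarrow> ((s, F), (s, F)) \<in> stokes_rel w"
  unfolding rel_iff by (rule conjI, simp, simp, rule exI[of _ 0], simp add: rot_axis_0 Cmat_0)

lemma rel_sym: "((s, F), (s', F')) \<in> stokes_rel w \<Longrightarrow> ((s', F'), (s, F)) \<in> stokes_rel w"
proof -
  assume "((s, F), (s', F')) \<in> stokes_rel w"
  then obtain t where F: "F \<in> local_frames w" "F' \<in> local_frames w" and t: "F' = rot_axis w t ** F" "s' = Cmat t *v s"
    unfolding rel_iff by blast
  have u: "w \<bullet> w = 1" using lf_D[OF F(1)] by simp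
  have "rot_axis w (-t) ** F' = F" unfolding t
    by (simp add: matrix_mul_assoc rot_axis_comp[OF u] rot_axis_0)
  moreover have "Cmat (-t) *v s' = s" unfolding t
    by (simp add: matrix_vector_mul_assoc Cmat_mul Cmat_0)
  ultimately show ?thesis unfolding rel_iff using F by metis
qed

lemma rel_trans: "((s, F), (s', F')) \<in> stokes_rel w \<Longrightarrow> ((s', F'), (s'', F'')) \<in> stokes_rel w
   \<Longrightarrow> ((s, F), (s'', F'')) \<in> stokes_rel w"
proof -
  assume a: "((s, F), (s', F')) \<in> stokes_rel w" and b: "((s', F'), (s'', F'')) \<in> stokes_rel w"
  then obtain t1 t2 where F: "F \<in> local_frames w" "F' \<in> local_frames w" "F'' \<in> local_frames w"
    and t: "F' = rot_axis w t1 ** F" "s' = Cmat t1 *v s" "F'' = rot_axis w t2 ** F'" "s'' = Cmat t2 *v s'"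
    unfolding rel_iff by blast
  have u: "w \<bullet> w = 1" using lf_D[OF F(1)] by simp
  have "F'' = rot_axis w (t2 + t1) ** F" unfolding t
    by (simp add: matrix_mul_assoc rot_axis_comp[OF u])
  moreover have "s'' = Cmat (t2 + t1) *v s" unfolding t
    by (simp add: matrix_vector_mul_assoc Cmat_mul)
  ultimately show ?thesis unfolding rel_iff using F by metis
qed

lemma rel_exists:
  assumes "F \<in> local_frames w" "F' \<in> local_frames w"
  shows "\<exists>t. ((s, F), (Cmat t *v s, F')) \<in> stokes_rel w \<and> F' = rot_axis w t ** F"
proof -
  have a: "F \<in> SO3" "F' \<in> SO3" "F *v zg = w" "F' *v zg = w" using lf_D assms by auto
  obtain t where "F' = rot_axis (F *v zg) t ** F" using local_frames_rot[OF a(1,2)] a(3,4) by metis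
  then show ?thesis unfolding rel_iff using assms a by auto
qed

lemma rel_same:
  assumes "((s, F), (s', F)) \<in> stokes_rel w"
  shows "s' = s"
proof -
  obtain t where F: "F \<in> local_frames w" and t: "F = rot_axis w t ** F" "s' = Cmat t *v s"
    using assms unfolding rel_iff by blast
  have a: "F \<in> SO3" "F *v zg = w" using lf_D[OF F] by auto
  have o: "F ** transpose F = mat 1" using SO3_orth[OF a(1)] by simp
  have "rot_axis w t = mat 1"
    using arg_cong[OF t(1), of "\<lambda>X. X ** transpose F"] o by (metis matrix_mul_assoc matrix_mul_rid)
  then have "cos t = 1 \<and> sin t = 0" using rot_id_imp[OF a(1)] a(2) by simp
  then show ?thesis using t(2) Cmat_id by simp
qed

lemma space_E:
  assumes "c \<in> stokes_space w"
  obtains s0 F0 where "F0 \<in> local_frames w" "c = stokes_rel w `` {(s0, F0)}"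
proof -
  from assms obtain x where "c = stokes_rel w `` {x}" "x \<in> UNIV \<times> local_frames w"
    unfolding stokes_space_def by (rule quotientE)
  then show ?thesis using that by (cases x) auto
qed

lemma comp_ex1:
  assumes c: "c \<in> stokes_space w" and F: "F \<in> local_frames w"
  shows "\<exists>!s. (s, F) \<in> c"
proof -
  obtain s0 F0 where F0: "F0 \<in> local_frames w" and ceq: "c = stokes_rel w `` {(s0, F0)}"
    using space_E[OF c] by blast
  obtain t where r0: "((s0, F0), (Cmat t *v s0, F)) \<in> stokes_rel w" using rel_exists[OF F0 F] by blast
  then have ex: "(Cmat t *v s0, F) \<in> c" unfolding ceq by simp
  show ?thesis
  proof (rule ex1I[where a="Cmat t *v s0" and P="\<lambda>s. (s, F) \<in> c", OF ex])
    fix s assume "(s, F) \<in> c"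
    then have "((s0, F0), (s, F)) \<in> stokes_rel w" unfolding ceq by simp
    then have "((Cmat t *v s0, F), (s, F)) \<in> stokes_rel w"
      by (rule rel_trans[OF rel_sym[OF r0]])
    then show "s = Cmat t *v s0" by (rule rel_same)
  qed
qed

lemma comp_mem: "c \<in> stokes_space w \<Longrightarrow> F \<in> local_frames w \<Longrightarrow> (comp c F, F) \<in> c"
  unfolding comp_def by (rule theI'[OF comp_ex1])

lemma comp_eq: "c \<in> stokes_space w \<Longrightarrow> F \<in> local_frames w \<Longrightarrow> (s, F) \<in> c \<Longrightarrow> comp c F = s"
  unfolding comp_def by (rule the1_equality[OF comp_ex1])

lemma cls_space: "F \<in> local_frames w \<Longrightarrow> stokes_cls w s F \<in> stokes_space w"
  unfolding stokes_cls_def stokes_space_def by (rule quotientI) simp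

lemma cls_mem: "F \<in> local_frames w \<Longrightarrow> (s, F) \<in> stokes_cls w s F"
  unfolding stokes_cls_def using rel_refl by simp

lemma comp_cls: assumes F: "F \<in> local_frames w" shows "comp (stokes_cls w s F) F = s"
  by (rule comp_eq[OF cls_space[OF F] F cls_mem[OF F]])

lemma space_closed:
  assumes c: "c \<in> stokes_space w" and m: "(s, F) \<in> c" and r: "((s, F), (s', F')) \<in> stokes_rel w"
  shows "(s', F') \<in> c"
proof -
  obtain s0 F0 where ceq: "c = stokes_rel w `` {(s0, F0)}" using space_E[OF c] by blast
  have "((s0, F0), (s, F)) \<in> stokes_rel w" using m ceq by simp
  from rel_trans[OF this r] show ?thesis using ceq by simp
qed

lemma cls_of: 
  assumes c: "c \<in> stokes_space w" and F: "F \<in> local_frames w"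
  shows "c = stokes_cls w (comp c F) F"
proof -
  obtain s0 F0 where ceq: "c = stokes_rel w `` {(s0, F0)}" using space_E[OF c] by blast
  have m: "((s0, F0), (comp c F, F)) \<in> stokes_rel w" using comp_mem[OF c F] unfolding ceq by simp
  show ?thesis unfolding stokes_cls_def
  proof (intro set_eqI iffI)
    fix x assume "x \<in> c"
    then have "((s0, F0), x) \<in> stokes_rel w" using ceq by simp
    then show "x \<in> stokes_rel w `` {(comp c F, F)}"
      using rel_trans[OF rel_sym[OF m]] by (cases x) auto
  next
    fix x assume "x \<in> stokes_rel w `` {(comp c F, F)}"
    then have "((comp c F, F), x) \<in> stokes_rel w" by simp
    then show "x \<in> c" using rel_trans[OF m] ceq by (cases x) auto
  qed
qed

lemma comp_rot:
  assumes F: "F \<in> local_frames w" and F': "F' \<in> local_frames w"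
  shows "\<exists>t. \<forall>c \<in> stokes_space w. comp c F' = Cmat t *v comp c F"
proof -
  obtain t where t: "F' = rot_axis w t ** F" using rel_exists[OF F F'] by blast
  have "comp c F' = Cmat t *v comp c F" if c: "c \<in> stokes_space w" for c
  proof -
    have r: "((comp c F, F), (Cmat t *v comp c F, F')) \<in> stokes_rel w"
      unfolding rel_iff using F F' t by blast
    show ?thesis by (rule comp_eq[OF c F' space_closed[OF c comp_mem[OF c F] r]])
  qed
  then show ?thesis by blast
qed



lemma ref_frame_lf: "F \<in> local_frames w \<Longrightarrow> ref_frame w \<in> local_frames w"
  unfolding ref_frame_def by (rule someI)

lemma mueller_works:
  assumes N: "stokes_linear wi wo N" and Fi: "Fi \<in> local_frames wi" and Fo: "Fo \<in> local_frames wo"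
    and c: "c \<in> stokes_space wi"
  shows "mueller_matrix wi N Fi Fo *v comp c Fi = comp (N c) Fo"
proof -
  define r where "r = ref_frame wi"
  define ro where "ro = ref_frame wo"
  have r: "r \<in> local_frames wi" unfolding r_def by (rule ref_frame_lf[OF Fi])
  have ro: "ro \<in> local_frames wo" unfolding ro_def by (rule ref_frame_lf[OF Fo])
  have Nsp: "\<And>c. c \<in> stokes_space wi \<Longrightarrow> N c \<in> stokes_space wo"
    and Nadd: "\<And>c d. c \<in> stokes_space wi \<Longrightarrow> d \<in> stokes_space wi \<Longrightarrow> N (stokes_add wi c d) = stokes_add wo (N c) (N d)"
    and Nsc: "\<And>a c. c \<in> stokes_space wi \<Longrightarrow> N (stokes_scale wi a c) = stokes_scale wo a (N c)"
    using N unfolding stokes_linear_def by blast+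
  define L where "L s = comp (N (stokes_cls wi s r)) ro" for s
  have lin: "linear L"
  proof (rule linearI)
    fix x y
    have cx: "stokes_cls wi x r \<in> stokes_space wi" "stokes_cls wi y r \<in> stokes_space wi"
      using cls_space[OF r] by auto
    have "stokes_add wi (stokes_cls wi x r) (stokes_cls wi y r) = stokes_cls wi (x + y) r"
      unfolding stokes_add_def r_def[symmetric] comp_cls[OF r] ..
    then have "N (stokes_cls wi (x + y) r) = stokes_cls wo (L x + L y) ro"
      using Nadd[OF cx] unfolding stokes_add_def ro_def[symmetric] r_def[symmetric] L_def by simp
    then show "L (x + y) = L x + L y" unfolding L_def[of "x+y"] using comp_cls[OF ro] by simp
  next
    fix a x
    have cx: "stokes_cls wi x r \<in> stokes_space wi" using cls_space[OF r] by auto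
    have "stokes_scale wi a (stokes_cls wi x r) = stokes_cls wi (a *\<^sub>R x) r"
      unfolding stokes_scale_def r_def[symmetric] comp_cls[OF r] ..
    then have "N (stokes_cls wi (a *\<^sub>R x) r) = stokes_cls wo (a *\<^sub>R L x) ro"
      using Nsc[OF cx, of a] unfolding stokes_scale_def ro_def[symmetric] r_def[symmetric] L_def by (simp add: comp_cls[OF r])
    then show "L (a *\<^sub>R x) = a *\<^sub>R L x" unfolding L_def[of "a *\<^sub>R x"] using comp_cls[OF ro] by simp
  qed
  have key: "comp (N c) ro = L (comp c r)" if "c \<in> stokes_space wi" for c
    unfolding L_def using cls_of[OF that r] by simp
  obtain ti where ti: "\<forall>c\<in>stokes_space wi. comp c r = Cmat ti *v comp c Fi" using comp_rot[OF Fi r] by blast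
  obtain to where to: "\<forall>d\<in>stokes_space wo. comp d Fo = Cmat to *v comp d ro" using comp_rot[OF ro Fo] by blast
  define M where "M = Cmat to ** matrix L ** Cmat ti"
  let ?P = "\<lambda>M. \<forall>c \<in> stokes_space wi. comp (N c) Fo = M *v comp c Fi"
  have PM: "?P M"
  proof
    fix c assume c: "c \<in> stokes_space wi"
    have "comp (N c) Fo = Cmat to *v L (Cmat ti *v comp c Fi)"
      using to Nsp[OF c] key[OF c] ti c by simp
    also have "\<dots> = M *v comp c Fi"
      unfolding M_def matrix_vector_mul_assoc[symmetric] using matrix_vector_mul(2)[OF lin] by metis
    finally show "comp (N c) Fo = M *v comp c Fi" .
  qed
  have uniq: "M' = M" if "?P M'" for M'
    unfolding matrix_eq
  proof
    fix s
    have "stokes_cls wi s Fi \<in> stokes_space wi" by (rule cls_space[OF Fi])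
    then show "M' *v s = M *v s" using that PM comp_cls[OF Fi] by metis
  qed
  have "mueller_matrix wi N Fi Fo = M"
    unfolding mueller_matrix_def using PM uniq by (rule the_equality)
  then show ?thesis using PM c by simp
qed



lemma lborel_Times:
  fixes A :: "'a::euclidean_space set" and B :: "'b::euclidean_space set"
  assumes "A \<in> sets borel" "B \<in> sets borel"
  shows "emeasure lborel (A \<times> B) = emeasure lborel A * emeasure lborel B"
proof -
  have "emeasure (lborel \<Otimes>\<^sub>M lborel) (A \<times> B) = emeasure lborel A * emeasure lborel B"
    using assms by (intro lborel.emeasure_pair_measure_Times) auto
  then show ?thesis by (simp add: lborel_prod)
qed

definition Tas :: "(real \<times> real) \<times> real \<Rightarrow> real \<times> real \<times> real" where
  "Tas p = (fst (fst p), snd (fst p), snd p)"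

definition Sas :: "real \<times> real \<times> real \<Rightarrow> (real \<times> real) \<times> real" where
  "Sas p = ((fst p, fst (snd p)), snd (snd p))"

lemma Tas_meas: "Tas \<in> measurable lborel lborel"
  unfolding Tas_def measurable_lborel1 measurable_lborel2
  by (intro borel_measurable_continuous_onI continuous_intros)

lemma Sas_meas: "Sas \<in> measurable lborel lborel"
  unfolding Sas_def measurable_lborel1 measurable_lborel2
  by (intro borel_measurable_continuous_onI continuous_intros)

lemma distr_Tas: "distr lborel lborel Tas = lborel"
proof (rule lborel_eqI[symmetric])
  show "sets (distr lborel lborel Tas) = sets borel" by simp
next
  fix l u :: "real \<times> real \<times> real"
  assume le: "\<And>b. b \<in> Basis \<Longrightarrow> l \<bullet> b \<le> u \<bullet> b"
  obtain l1 l2 l3 where l: "l = (l1, l2, l3)" by (cases l) auto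
  obtain u1 u2 u3 where u: "u = (u1, u2, u3)" by (cases u) auto
  have bx: "box l u = box l1 u1 \<times> (box l2 u2 \<times> box l3 u3)" unfolding l u by (simp add: box_prod)
  have pre: "Tas -` box l u \<inter> space lborel = (box l1 u1 \<times> box l2 u2) \<times> box l3 u3"
    unfolding bx Tas_def by auto
  have "emeasure (distr lborel lborel Tas) (box l u) = emeasure lborel ((box l1 u1 \<times> box l2 u2) \<times> box l3 u3)"
    using emeasure_distr[OF Tas_meas, of "box l u"] unfolding pre by simp
  also have "\<dots> = emeasure lborel (box l1 u1 \<times> box l2 u2) * emeasure lborel (box l3 u3)"
    by (rule lborel_Times) (auto intro!: borel_open open_Times)
  also have "\<dots> = emeasure lborel (box l1 u1) * emeasure lborel (box l2 u2) * emeasure lborel (box l3 u3)"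
    by (subst lborel_Times) (auto intro!: borel_open open_Times)
  also have "\<dots> = emeasure lborel (box l1 u1) * emeasure lborel (box l2 u2 \<times> box l3 u3)"
    by (subst lborel_Times[of "box l2 u2"]) (auto intro!: borel_open open_Times simp: mult.assoc)
  also have "\<dots> = emeasure lborel (box l u)"
    unfolding bx by (rule lborel_Times[symmetric]) (auto intro!: borel_open open_Times)
  also have "\<dots> = (\<Prod>b\<in>Basis. (u - l) \<bullet> b)" using le by (rule emeasure_lborel_box)
  finally show "emeasure (distr lborel lborel Tas) (box l u) = (\<Prod>b\<in>Basis. (u - l) \<bullet> b)" .
qed

lemma integral_assoc:
  fixes F :: "real \<times> real \<times> real \<Rightarrow> 'b::{banach,second_countable_topology}"
  shows "integral\<^sup>L lborel F = integral\<^sup>L lborel (\<lambda>p. F (Tas p))"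
proof (cases "F \<in> borel_measurable lborel")
  case True
  have "integral\<^sup>L lborel F = integral\<^sup>L (distr lborel lborel Tas) F" by (simp add: distr_Tas)
  also have "\<dots> = integral\<^sup>L lborel (\<lambda>p. F (Tas p))" by (rule integral_distr[OF Tas_meas True])
  finally show ?thesis .
next
  case False
  have "(\<lambda>p. F (Tas p)) \<notin> borel_measurable lborel"
  proof
    assume "(\<lambda>p. F (Tas p)) \<in> borel_measurable lborel"
    then have "(\<lambda>q. F (Tas (Sas q))) \<in> borel_measurable lborel"
      by (rule measurable_compose[OF Sas_meas])
    moreover have "(\<lambda>q. F (Tas (Sas q))) = F" by (simp add: Tas_def Sas_def)
    ultimately show False using False by simp
  qed
  then show ?thesis using False
    by (metis borel_measurable_integrable not_integrable_integral_eq)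
qed

lemma integral_times_interval:
  fixes G :: "real \<times> real \<Rightarrow> 'b::{banach,second_countable_topology}"
  assumes C: "C = {0..2*pi}"
  shows "integral\<^sup>L lborel (\<lambda>p::(real \<times> real) \<times> real. indicator C (snd p) *\<^sub>R G (fst p))
      = (2*pi) *\<^sub>R integral\<^sup>L lborel G"
proof -
  let ?\<Phi> = "\<lambda>p::(real \<times> real) \<times> real. indicator C (snd p) *\<^sub>R G (fst p)"
  have iC: "integrable lborel (indicator C :: real \<Rightarrow> real)" unfolding C by simp
  have mC: "integral\<^sup>L lborel (indicator C :: real \<Rightarrow> real) = 2*pi" unfolding C by simp
  have inner: "(\<integral>c. ?\<Phi> (x, c) \<partial>lborel) = (2*pi) *\<^sub>R G x" for x
    using iC mC by simp
  have L: "integral\<^sup>L lborel ?\<Phi> = integral\<^sup>L (lborel \<Otimes>\<^sub>M lborel) ?\<Phi>" by (simp add: lborel_prod)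
  show ?thesis
  proof (cases "integrable lborel G")
    case True
    have int: "integrable (lborel \<Otimes>\<^sub>M lborel) ?\<Phi>"
    proof (rule lborel_pair.Fubini_integrable)
      show "?\<Phi> \<in> borel_measurable (lborel \<Otimes>\<^sub>M lborel)"
        using borel_measurable_integrable[OF True] unfolding C by measurable
      have "(\<lambda>x. \<integral>c. norm (?\<Phi> (x, c)) \<partial>lborel) = (\<lambda>x. (2*pi) * norm (G x))"
        using iC mC by (simp add: abs_mult)
      then show "integrable lborel (\<lambda>x. \<integral>c. norm (?\<Phi> (x, c)) \<partial>lborel)"
        using True by simp
      show "AE x in lborel. integrable lborel (\<lambda>c. ?\<Phi> (x, c))"
        using iC by simp
    qed
    have "integral\<^sup>L lborel ?\<Phi> = (\<integral>x. (\<integral>c. ?\<Phi> (x, c) \<partial>lborel) \<partial>lborel)"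
      unfolding L by (rule lborel_pair.integral_fst'[OF int, symmetric])
    also have "\<dots> = (2*pi) *\<^sub>R integral\<^sup>L lborel G" unfolding inner by simp
    finally show ?thesis .
  next
    case False
    have "\<not> integrable (lborel \<Otimes>\<^sub>M lborel) ?\<Phi>"
    proof
      assume "integrable (lborel \<Otimes>\<^sub>M lborel) ?\<Phi>"
      from lborel_pair.integrable_fst'[OF this] have "integrable lborel (\<lambda>x. (2*pi) *\<^sub>R G x)"
        unfolding inner .
      then have "integrable lborel (\<lambda>x. (1 / (2*pi)) *\<^sub>R ((2*pi) *\<^sub>R G x))"
        by (rule integrable_scaleR_right)
      moreover have "(\<lambda>x. (1 / (2*pi)) *\<^sub>R ((2*pi) *\<^sub>R G x)) = G" by (rule ext) simp
      ultimately show False using False by simp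
    qed
    then show ?thesis using False L by (simp add: not_integrable_integral_eq)
  qed
qed



lemma so3_reduce:
  fixes X :: "mat3 \<Rightarrow> 'b::{banach,second_countable_topology}"
  assumes X: "\<And>a b c. X (euler a b c) = h (sph a b)"
  shows "so3_integral X = (2*pi) *\<^sub>R sphere_integral h"
proof -
  let ?B3 = "{0..2*pi} \<times> {0..pi} \<times> {0..2*pi}"
  let ?B2 = "{0..2*pi} \<times> {0..pi}"
  let ?g = "\<lambda>p::real\<times>real\<times>real. indicator ?B3 p *\<^sub>R (sin (fst (snd p)) *\<^sub>R h (sph (fst p) (fst (snd p))))"
  have "so3_integral X = integral\<^sup>L lborel ?g"
    unfolding so3_integral_def set_lebesgue_integral_def X ..
  also have "\<dots> = integral\<^sup>L lborel (\<lambda>q. ?g (Tas q))" by (rule integral_assoc)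
  also have "(\<lambda>q. ?g (Tas q)) = (\<lambda>q. indicator {0..2*pi} (snd q) *\<^sub>R
        (indicator ?B2 (fst q) *\<^sub>R (sin (snd (fst q)) *\<^sub>R h (sph (fst (fst q)) (snd (fst q))))))"
    by (rule ext) (simp add: Tas_def indicator_times)
  also have "integral\<^sup>L lborel \<dots> = (2*pi) *\<^sub>R integral\<^sup>L lborel
        (\<lambda>x. indicator ?B2 x *\<^sub>R (sin (snd x) *\<^sub>R h (sph (fst x) (snd x))))"
    by (rule integral_times_interval) simp
  also have "\<dots> = (2*pi) *\<^sub>R sphere_integral h"
    unfolding sphere_integral_def set_lebesgue_integral_def ..
  finally show ?thesis .
qed

lemma sph_S2: "sph a b \<in> S2"
proof -
  have "(euler a b 0 *v zg) \<bullet> (euler a b 0 *v zg) = 1" by (rule SO3_unit[OF euler_SO3])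
  then show ?thesis unfolding euler_zg by (simp add: norm_eq_1)
qed

theorem mainTheorem6:
  fixes f :: "vec3 \<Rightarrow> stokes_class"
    and K :: "vec3 \<Rightarrow> vec3 \<Rightarrow> stokes_class \<Rightarrow> stokes_class"
  assumes "stokes_field f"
    and "mueller_field K"
  shows "\<forall>Ro \<in> SO3. rot_form (induced_op K f) Ro =
           (1 / (2 * pi)) *\<^sub>R so3_integral (\<lambda>Ri. rot_form_K K Ri Ro *v rot_form f Ri)"
proof
  fix Ro assume Ro: "Ro \<in> SO3"
  define wo where "wo = Ro *v zg"
  have Rolf: "Ro \<in> local_frames wo" unfolding wo_def by (rule lf_I[OF Ro])
  have woS: "wo \<in> S2" using SO3_unit[OF Ro] unfolding wo_def by (simp add: norm_eq_1)
  define ro where "ro = ref_frame wo"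
  have ro: "ro \<in> local_frames wo" unfolding ro_def by (rule ref_frame_lf[OF Rolf])
  define h where "h v = comp (K v wo (f v)) Ro" for v
  define h0 where "h0 v = comp (K v wo (f v)) ro" for v
  obtain t where t: "\<forall>d\<in>stokes_space wo. comp d Ro = Cmat t *v comp d ro"
    using comp_rot[OF ro Rolf] by blast
  have fsp: "\<And>v. v \<in> S2 \<Longrightarrow> f v \<in> stokes_space v" using assms(1) unfolding stokes_field_def by blast
  have Klin: "\<And>v. v \<in> S2 \<Longrightarrow> stokes_linear v wo (K v wo)" using assms(2) woS unfolding mueller_field_def by blast
  have Ksp: "\<And>v. v \<in> S2 \<Longrightarrow> K v wo (f v) \<in> stokes_space wo"
    using Klin fsp unfolding stokes_linear_def by blast
  have hh0: "\<And>a b. Cmat t *v h0 (sph a b) = h (sph a b)"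
    unfolding h_def h0_def using t Ksp[OF sph_S2] by simp
  have gf: "\<And>R. R ** global_frame = R" by (simp add: global_frame_def)
  have inv: "\<And>x. Cmat (-t) *v (Cmat t *v x) = x"
    by (simp add: matrix_vector_mul_assoc Cmat_mul Cmat_0)
  have "rot_form (induced_op K f) Ro = comp (stokes_cls wo (sphere_integral h0) ro) Ro"
    unfolding rot_form_def induced_op_def stokes_sphere_integral_def gf wo_def[symmetric]
      ro_def[symmetric] h0_def ..
  also have "\<dots> = Cmat t *v sphere_integral h0"
    using t cls_space[OF ro] comp_cls[OF ro] by simp
  also have "\<dots> = sphere_integral (\<lambda>v. Cmat t *v h0 v)"
    unfolding sphere_integral_def set_lebesgue_integral_def
    by (subst integral_bounded_linear'[where T="(*v) (Cmat t)" and T'="(*v) (Cmat (-t))", symmetric])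
       (simp_all add: inv matrix_vector_mult_scaleR)
  also have "\<dots> = sphere_integral h"
    unfolding sphere_integral_def hh0 ..
  finally have L: "rot_form (induced_op K f) Ro = sphere_integral h" .
  have X: "rot_form_K K (euler a b c) Ro *v rot_form f (euler a b c) = h (sph a b)" for a b c
  proof -
    have v: "euler a b c *v zg = sph a b" by (rule euler_zg)
    have Ri: "euler a b c \<in> local_frames (sph a b)" using lf_I[OF euler_SO3] v by metis
    show ?thesis
      unfolding rot_form_K_def rot_form_def gf v wo_def[symmetric] h_def
      by (rule mueller_works[OF Klin[OF sph_S2] Ri Rolf fsp[OF sph_S2]])
  qed
  have "so3_integral (\<lambda>Ri. rot_form_K K Ri Ro *v rot_form f Ri) = (2*pi) *\<^sub>R sphere_integral h"
    by (rule so3_reduce) (rule X)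
  then show "rot_form (induced_op K f) Ro =
           (1 / (2 * pi)) *\<^sub>R so3_integral (\<lambda>Ri. rot_form_K K Ri Ro *v rot_form f Ri)"
    using L by simp
qed

end
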